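(* Let $X$ be a set, $B=(B,+,0)$ a unitary magma and $(A,k,q,s,p)$ a retraction point from $X$ to $B$. Suppose that $k(x)+s(b+b')=(k(x)+s(b))+s(b')$ for all $x\in X$ and $b,b'\in B$. Then every retraction point of the form $(B,k',q',s',p')$ (from any set $Y$ to any unitary magma $C$) is composable with $(A,k,q,s,p)$.
   Context: A unitary magma is a set with a binary operation $+$ and an element $0$ with $b+0=b=0+b$ for all $b$; morphisms preserve $+$ and $0$. Given a set $X$ and a unitary magma $B$, a retraction point from $X$ to $B$ is a tuple $(A,k,q,s,p)$ where $A=(A,+,0)$ is a unitary magma, $k\colon X\to A$ and $q\colon A\to X$ are maps, $s\colon B\to A$ and $p\colon A\to B$ are morphisms of unitary magmas, and $p(s(b))=b$, $q(k(x))=x$, $p(k(x))=0$, $q(s(b))=q(0)$, and $k(q(a))+s(p(a))=a$ for all $x\in X$, $b\in B$, $a\in A$. Composability: let $(A,k,q,s,p)$ be a retraction point from $X$ to $B$ and $(B,k',q',s',p')$ a retraction point from a set $Y$ to a unitary magma $C$. Let $A\times_B Y=\{(a,y)\in A\times Y\mid p(a)=k'(y)\}$ with first projection $\pi_1\colon A\times_B Y\to A$, and define $q''\colon A\to A\times_B Y$ by $q''(a)=\big(k(q(a))+s(k'(q'(p(a)))),\ q'(p(a))\big)$. The retraction point $(B,k',q',s',p')$ is said to be composable with $(A,k,q,s,p)$ if $(A,\pi_1,q'',s s',p'p)$ is a retraction point from the set $A\times_B Y$ to $C$. *)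

theory Defs
  imports Main "HOL-Library.FuncSet"
begin

definition unitary_magma :: "'a set \<Rightarrow> ('a \<Rightarrow> 'a \<Rightarrow> 'a) \<Rightarrow> 'a \<Rightarrow> bool" where
  "unitary_magma M pl z \<longleftrightarrow>
     z \<in> M \<and> (\<forall>a\<in>M. \<forall>b\<in>M. pl a b \<in> M) \<and> (\<forall>b\<in>M. pl b z = b \<and> pl z b = b)"

definition magma_hom ::
  "'a set \<Rightarrow> ('a \<Rightarrow> 'a \<Rightarrow> 'a) \<Rightarrow> 'a \<Rightarrow> 'b set \<Rightarrow> ('b \<Rightarrow> 'b \<Rightarrow> 'b) \<Rightarrow> 'b \<Rightarrow> ('a \<Rightarrow> 'b) \<Rightarrow> bool" where
  "magma_hom M plM zM N plN zN f \<longleftrightarrow>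
     f \<in> M \<rightarrow> N \<and> (\<forall>a\<in>M. \<forall>b\<in>M. f (plM a b) = plN (f a) (f b)) \<and> f zM = zN"

definition retraction_point ::
  "'x set \<Rightarrow> 'b set \<Rightarrow> ('b \<Rightarrow> 'b \<Rightarrow> 'b) \<Rightarrow> 'b \<Rightarrow>
   'a set \<Rightarrow> ('a \<Rightarrow> 'a \<Rightarrow> 'a) \<Rightarrow> 'a \<Rightarrow>
   ('x \<Rightarrow> 'a) \<Rightarrow> ('a \<Rightarrow> 'x) \<Rightarrow> ('b \<Rightarrow> 'a) \<Rightarrow> ('a \<Rightarrow> 'b) \<Rightarrow> bool" where
  "retraction_point X B plB zB A plA zA k q s p \<longleftrightarrow>
     unitary_magma B plB zB \<and> unitary_magma A plA zA \<and>
     k \<in> X \<rightarrow> A \<and> q \<in> A \<rightarrow> X \<and>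
     magma_hom B plB zB A plA zA s \<and> magma_hom A plA zA B plB zB p \<and>
     (\<forall>b\<in>B. p (s b) = b) \<and> (\<forall>x\<in>X. q (k x) = x) \<and> (\<forall>x\<in>X. p (k x) = zB) \<and>
     (\<forall>b\<in>B. q (s b) = q zA) \<and> (\<forall>a\<in>A. plA (k (q a)) (s (p a)) = a)"

definition fib_prod :: "'a set \<Rightarrow> ('a \<Rightarrow> 'b) \<Rightarrow> 'y set \<Rightarrow> ('y \<Rightarrow> 'b) \<Rightarrow> ('a \<times> 'y) set" where
  "fib_prod A p Y k' = {(a, y). a \<in> A \<and> y \<in> Y \<and> p a = k' y}"

definition composable ::
  "'x set \<Rightarrow> 'b set \<Rightarrow> ('b \<Rightarrow> 'b \<Rightarrow> 'b) \<Rightarrow> 'b \<Rightarrow>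
   'a set \<Rightarrow> ('a \<Rightarrow> 'a \<Rightarrow> 'a) \<Rightarrow> 'a \<Rightarrow>
   ('x \<Rightarrow> 'a) \<Rightarrow> ('a \<Rightarrow> 'x) \<Rightarrow> ('b \<Rightarrow> 'a) \<Rightarrow> ('a \<Rightarrow> 'b) \<Rightarrow>
   'y set \<Rightarrow> 'c set \<Rightarrow> ('c \<Rightarrow> 'c \<Rightarrow> 'c) \<Rightarrow> 'c \<Rightarrow>
   ('y \<Rightarrow> 'b) \<Rightarrow> ('b \<Rightarrow> 'y) \<Rightarrow> ('c \<Rightarrow> 'b) \<Rightarrow> ('b \<Rightarrow> 'c) \<Rightarrow> bool" where
  "composable X B plB zB A plA zA k q s p Y C plC zC k' q' s' p' \<longleftrightarrow>
     retraction_point (fib_prod A p Y k') C plC zC A plA zA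
       fst
       (\<lambda>a. (plA (k (q a)) (s (k' (q' (p a)))), q' (p a)))
       (s \<circ> s') (p' \<circ> p)"

end

theory Submission
  imports Defs
begin

theorem proposition2p2:
  fixes X :: "'x set" and B :: "'b set" and A :: "'a set"
    and plB :: "'b \<Rightarrow> 'b \<Rightarrow> 'b" and plA :: "'a \<Rightarrow> 'a \<Rightarrow> 'a"
  assumes "unitary_magma B plB zB"
    and "retraction_point X B plB zB A plA zA k q s p"
    and "\<forall>x\<in>X. \<forall>b\<in>B. \<forall>b'\<in>B. plA (k x) (s (plB b b')) = plA (plA (k x) (s b)) (s b')"
  shows "\<forall>(Y :: 'y set) (C :: 'c set) plC zC k' q' s' p'.
           retraction_point Y C plC zC B plB zB k' q' s' p' \<longrightarrow>
           composable X B plB zB A plA zA k q s p Y C plC zC k' q' s' p'"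
proof (intro allI impI)
  fix Y :: "'y set" and C :: "'c set" and plC zC k' q' s' p'
  assume r2: "retraction_point Y C plC zC B plB zB k' q' s' p'"
  note r1 = assms(2)[unfolded retraction_point_def magma_hom_def unitary_magma_def Pi_def, simplified]
  note r2' = r2[unfolded retraction_point_def magma_hom_def unitary_magma_def Pi_def, simplified]
  note as = assms(3)
  show "composable X B plB zB A plA zA k q s p Y C plC zC k' q' s' p'"
    unfolding composable_def retraction_point_def
  proof (intro conjI)
    show "unitary_magma C plC zC" using r2 unfolding retraction_point_def by blast
    show "unitary_magma A plA zA" using assms(2) unfolding retraction_point_def by blast
    show "fst \<in> fib_prod A p Y k' \<rightarrow> A" unfolding fib_prod_def by auto
    show "(\<lambda>a. (plA (k (q a)) (s (k' (q' (p a)))), q' (p a))) \<in> A \<rightarrow> fib_prod A p Y k'"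
    proof
      fix a assume a: "a \<in> A"
      have pa: "p a \<in> B" using a r1 by blast
      have qa: "q a \<in> X" using a r1 by blast
      have y: "q' (p a) \<in> Y" using pa r2' by blast
      have ky: "k' (q' (p a)) \<in> B" using y r2' by blast
      have kq: "k (q a) \<in> A" using qa r1 by blast
      have sk: "s (k' (q' (p a))) \<in> A" using ky r1 by blast
      have "p (plA (k (q a)) (s (k' (q' (p a))))) = plB (p (k (q a))) (p (s (k' (q' (p a)))))"
        using kq sk r1 by blast
      also have "\<dots> = k' (q' (p a))" using qa ky r1 by simp
      finally show "(plA (k (q a)) (s (k' (q' (p a)))), q' (p a)) \<in> fib_prod A p Y k'"
        unfolding fib_prod_def using kq sk y r1 by auto
    qed
    show "magma_hom C plC zC A plA zA (s \<circ> s')"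
      using r1 r2' unfolding magma_hom_def Pi_def by auto
    show "magma_hom A plA zA C plC zC (p' \<circ> p)"
      using r1 r2' unfolding magma_hom_def Pi_def by auto
    show "\<forall>b\<in>C. (p' \<circ> p) ((s \<circ> s') b) = b" using r1 r2' by auto
    show "\<forall>x\<in>fib_prod A p Y k'. (\<lambda>a. (plA (k (q a)) (s (k' (q' (p a)))), q' (p a))) (fst x) = x"
    proof
      fix x assume "x \<in> fib_prod A p Y k'"
      then obtain a y where x: "x = (a, y)" "a \<in> A" "y \<in> Y" "p a = k' y"
        unfolding fib_prod_def by auto
      have "q' (p a) = y" using x r2' by auto
      moreover have "plA (k (q a)) (s (k' y)) = a" using x r1 by metis
      ultimately show "(\<lambda>a. (plA (k (q a)) (s (k' (q' (p a)))), q' (p a))) (fst x) = x"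
        using x by simp
    qed
    show "\<forall>x\<in>fib_prod A p Y k'. (p' \<circ> p) (fst x) = zC"
      unfolding fib_prod_def using r2' by auto
    show "\<forall>b\<in>C. (\<lambda>a. (plA (k (q a)) (s (k' (q' (p a)))), q' (p a))) ((s \<circ> s') b) =
        (\<lambda>a. (plA (k (q a)) (s (k' (q' (p a)))), q' (p a))) zA"
      using r1 r2' by auto
    show "\<forall>a\<in>A. plA (fst ((\<lambda>a. (plA (k (q a)) (s (k' (q' (p a)))), q' (p a))) a)) ((s \<circ> s') ((p' \<circ> p) a)) = a"
    proof
      fix a assume a: "a \<in> A"
      have pa: "p a \<in> B" using a r1 by blast
      have qa: "q a \<in> X" using a r1 by blast
      have y: "q' (p a) \<in> Y" using pa r2' by blast
      have ky: "k' (q' (p a)) \<in> B" using y r2' by blast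
      have sp: "s' (p' (p a)) \<in> B" using pa r2' by blast
      have "plA (plA (k (q a)) (s (k' (q' (p a))))) (s (s' (p' (p a))))
          = plA (k (q a)) (s (plB (k' (q' (p a))) (s' (p' (p a)))))"
        using as qa ky sp by simp
      also have "\<dots> = plA (k (q a)) (s (p a))" using pa r2' by simp
      also have "\<dots> = a" using a r1 by simp
      finally show "plA (fst ((\<lambda>a. (plA (k (q a)) (s (k' (q' (p a)))), q' (p a))) a)) ((s \<circ> s') ((p' \<circ> p) a)) = a"
        by simp
    qed
  qed
qed

end
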